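(* Let $A$ and $B$ be disjoint cubic graphs with $v(A)\equiv 0\pmod 6$ and $v(B)\equiv 4\pmod 6$, let $a=a_1a_2\in E(A)$, $x\in V(B)$, and $b=b_1b_2\in E(B)$. Suppose $A$ has no $\Lambda$-factor containing $a$, and $B-x$ has no $\Lambda$-factor avoiding $b$ (so $x$ is not incident to $b$). Let $G=AabB$. Then $v(G)\equiv 4\pmod 6$ and $G-x$ has no $\Lambda$-factor.
   Context: Graphs are finite, undirected, without loops or multiple edges; $v(G)=|V(G)|$. For disjoint graphs $A,B$ with $a=a_1a_2\in E(A)$, $b=b_1b_2\in E(B)$, $AabB$ is obtained from $(A-a)\cup(B-b)$ (edge deletions) by adding the new edges $a_1b_1$ and $a_2b_2$. $G-x$ denotes deletion of the vertex $x$. A $\Lambda$-factor of a graph is a spanning subgraph each of whose components is a path on 3 vertices; it avoids an edge $e$ if $e$ is not one of its edges. *)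

theory Defs
  imports Main
begin

definition graph :: "'a set \<Rightarrow> 'a set set \<Rightarrow> bool" where
  "graph V E \<longleftrightarrow> finite V \<and> (\<forall>e\<in>E. \<exists>u v. e = {u, v} \<and> u \<noteq> v \<and> u \<in> V \<and> v \<in> V)"

definition degree :: "'a set set \<Rightarrow> 'a \<Rightarrow> nat" where
  "degree E v = card {e \<in> E. v \<in> e}"

definition cubic :: "'a set \<Rightarrow> 'a set set \<Rightarrow> bool" where
  "cubic V E \<longleftrightarrow> graph V E \<and> (\<forall>v\<in>V. degree E v = 3)"

definition del_vert_V :: "'a set \<Rightarrow> 'a \<Rightarrow> 'a set" where
  "del_vert_V V x = V - {x}"

definition del_vert_E :: "'a set set \<Rightarrow> 'a \<Rightarrow> 'a set set" where
  "del_vert_E E x = {e \<in> E. x \<notin> e}"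

definition join_V :: "'a set \<Rightarrow> 'a set \<Rightarrow> 'a set" where
  "join_V VA VB = VA \<union> VB"

definition join_E :: "'a set set \<Rightarrow> 'a \<Rightarrow> 'a \<Rightarrow> 'a set set \<Rightarrow> 'a \<Rightarrow> 'a \<Rightarrow> 'a set set" where
  "join_E EA a1 a2 EB b1 b2 =
     (EA - {{a1, a2}}) \<union> (EB - {{b1, b2}}) \<union> {{a1, b1}, {a2, b2}}"

definition comp :: "'a set set \<Rightarrow> 'a \<Rightarrow> 'a set" where
  "comp F v = {w. (v, w) \<in> {(x, y). {x, y} \<in> F}\<^sup>*}"

text \<open>A \<Lambda>-factor of (V,E): a spanning subgraph (V,F), F \<subseteq> E, each of whose components
  is a path on 3 vertices, i.e. a connected graph with 3 vertices and 2 edges.\<close>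
definition lambda_factor :: "'a set \<Rightarrow> 'a set set \<Rightarrow> 'a set set \<Rightarrow> bool" where
  "lambda_factor V E F \<longleftrightarrow> F \<subseteq> E \<and>
     (\<forall>v\<in>V. card (comp F v) = 3 \<and> card {e \<in> F. e \<subseteq> comp F v} = 2)"

end

theory Submission
  imports Defs
begin


definition closedS :: "'a set set \<Rightarrow> 'a set \<Rightarrow> bool" where
  "closedS F S \<longleftrightarrow> (\<forall>e\<in>F. e \<inter> S \<noteq> {} \<longrightarrow> e \<subseteq> S)"

lemma closedD: "closedS F S \<Longrightarrow> e \<in> F \<Longrightarrow> y \<in> e \<Longrightarrow> y \<in> S \<Longrightarrow> e \<subseteq> S"
  unfolding closedS_def by blast

lemma closedI: "(\<And>e y. e \<in> F \<Longrightarrow> y \<in> e \<Longrightarrow> y \<in> S \<Longrightarrow> e \<subseteq> S) \<Longrightarrow> closedS F S"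
  unfolding closedS_def by blast

definition eform :: "'a set set \<Rightarrow> bool" where
  "eform F \<longleftrightarrow> (\<forall>e\<in>F. \<exists>p q. e = {p, q})"

lemma comp_self: "v \<in> comp F v"
  by (simp add: comp_def)

lemma L1_aux: "(v, w) \<in> {(x, y). {x, y} \<in> F}\<^sup>* \<Longrightarrow> v \<in> S \<Longrightarrow> closedS F S \<Longrightarrow> w \<in> S"
proof (induction rule: rtrancl_induct)
  case base then show ?case by simp
next
  case (step y z)
  have e: "{y, z} \<in> F" using step(2) by simp
  have y: "y \<in> S" using step(3,4,5) by simp
  have "{y, z} \<subseteq> S" by (rule closedD[OF step(5) e _ y]) simp
  then show ?case by simp
qed

lemma L1: "v \<in> S \<Longrightarrow> closedS F S \<Longrightarrow> comp F v \<subseteq> S"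
proof
  fix w assume "v \<in> S" "closedS F S" "w \<in> comp F v"
  then show "w \<in> S" using L1_aux[of v w F S] unfolding comp_def by simp
qed

lemma comp_step: "p \<in> comp F v \<Longrightarrow> {p, q} \<in> F \<Longrightarrow> q \<in> comp F v"
proof -
  assume a: "p \<in> comp F v" "{p, q} \<in> F"
  have "(v, p) \<in> {(x, y). {x, y} \<in> F}\<^sup>*" using a(1) unfolding comp_def by (rule CollectD)
  moreover have "(p, q) \<in> {(x, y). {x, y} \<in> F}" using a(2) by simp
  ultimately have "(v, q) \<in> {(x, y). {x, y} \<in> F}\<^sup>*" by (rule rtrancl_into_rtrancl)
  then show ?thesis unfolding comp_def by (rule CollectI)
qed

lemma L0: assumes "eform F" shows "closedS F (comp F v)"
proof (rule closedI)
  fix e y assume e: "e \<in> F" "y \<in> e" "y \<in> comp F v"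
  then obtain p q where pq: "e = {p, q}" using assms eform_def by metis
  have sym: "{p, q} = {q, p}" by (rule insert_commute)
  from e pq have "p \<in> comp F v \<or> q \<in> comp F v" by blast
  then show "e \<subseteq> comp F v"
  proof
    assume p: "p \<in> comp F v"
    have "q \<in> comp F v" using comp_step[OF p] e(1) pq by simp
    with p pq show ?thesis by simp
  next
    assume q: "q \<in> comp F v"
    have "p \<in> comp F v" using comp_step[OF q] e(1) pq sym by simp
    with q pq show ?thesis by simp
  qed
qed

lemma L2_aux: "(v, w) \<in> {(x, y). {x, y} \<in> F}\<^sup>* \<Longrightarrow> v \<in> S \<Longrightarrow> closedS F S
   \<Longrightarrow> {e\<in>F. e \<subseteq> S} \<subseteq> F' \<Longrightarrow> (v, w) \<in> {(x, y). {x, y} \<in> F'}\<^sup>*"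
proof (induction rule: rtrancl_induct)
  case base then show ?case by simp
next
  case (step y z)
  have yS: "y \<in> S" using L1_aux step(1,4,5) by metis
  have e: "{y, z} \<in> F" using step(2) by simp
  have "{y,z} \<subseteq> S" by (rule closedD[OF step(5) e _ yS]) simp
  with e step(6) have "{y,z} \<in> F'" by blast
  then have "(y, z) \<in> {(x, y). {x, y} \<in> F'}" by simp
  with step(3)[OF step(4,5,6)] show ?case by (rule rtrancl_into_rtrancl)
qed

lemma L2: assumes "v \<in> S" "closedS F S" "closedS F' S" "{e\<in>F. e \<subseteq> S} = {e\<in>F'. e \<subseteq> S}"
  shows "comp F v = comp F' v"
proof -
  have h1: "{e\<in>F. e \<subseteq> S} \<subseteq> F'" and h2: "{e\<in>F'. e \<subseteq> S} \<subseteq> F" using assms(4) by blast+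
  show ?thesis
  proof (rule set_eqI, rule iffI)
    fix w assume "w \<in> comp F v"
    then have "(v, w) \<in> {(x, y). {x, y} \<in> F}\<^sup>*" unfolding comp_def by (rule CollectD)
    from L2_aux[OF this assms(1,2) h1] show "w \<in> comp F' v" unfolding comp_def by (rule CollectI)
  next
    fix w assume "w \<in> comp F' v"
    then have "(v, w) \<in> {(x, y). {x, y} \<in> F'}\<^sup>*" unfolding comp_def by (rule CollectD)
    from L2_aux[OF this assms(1,3) h2] show "w \<in> comp F v" unfolding comp_def by (rule CollectI)
  qed
qed

lemma L3: assumes "w \<in> comp F v" shows "comp F w = comp F v"
proof -
  let ?R = "{(x, y). {x, y} \<in> F}"
  have "sym ?R" unfolding sym_def by (auto simp: insert_commute)
  then have s: "sym (?R\<^sup>*)" by (rule sym_rtrancl)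
  have vw: "(v, w) \<in> ?R\<^sup>*" using assms unfolding comp_def by (rule CollectD)
  then have wv: "(w, v) \<in> ?R\<^sup>*" using s by (meson symD)
  show ?thesis
  proof (rule set_eqI, rule iffI)
    fix z assume "z \<in> comp F w"
    then have "(w, z) \<in> ?R\<^sup>*" unfolding comp_def by (rule CollectD)
    with vw have "(v, z) \<in> ?R\<^sup>*" by (rule rtrancl_trans)
    then show "z \<in> comp F v" unfolding comp_def by (rule CollectI)
  next
    fix z assume "z \<in> comp F v"
    then have "(v, z) \<in> ?R\<^sup>*" unfolding comp_def by (rule CollectD)
    with wv have "(w, z) \<in> ?R\<^sup>*" by (rule rtrancl_trans)
    then show "z \<in> comp F w" unfolding comp_def by (rule CollectI)
  qed
qed

lemma comp_disj: "u \<notin> comp F v \<Longrightarrow> comp F u \<inter> comp F v = {}"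
  using L3 comp_self by (metis disjoint_iff)

lemma L4: "finite W \<Longrightarrow> closedS F W \<Longrightarrow> eform F \<Longrightarrow> (\<forall>v\<in>W. card (comp F v) = 3) \<Longrightarrow> 3 dvd card W"
proof (induction W rule: finite_psubset_induct)
  case (psubset W)
  show ?case
  proof (cases "W = {}")
    case True then show ?thesis by simp
  next
    case False
    then obtain v where v: "v \<in> W" by blast
    let ?C = "comp F v"
    have CW: "?C \<subseteq> W" by (rule L1[OF v psubset.prems(1)])
    have c3: "card ?C = 3" using v psubset.prems(3) by blast
    let ?W = "W - ?C"
    have sub: "?W \<subset> W" using v comp_self[of v F] by blast
    have cl: "closedS F ?W"
    proof (rule closedI)
      fix e y assume e: "e \<in> F" "y \<in> e" "y \<in> ?W"
      have "e \<subseteq> W" using closedD[OF psubset.prems(1) e(1,2)] e(3) by blast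
      moreover have "e \<inter> ?C = {}"
      proof (rule ccontr)
        assume "e \<inter> ?C \<noteq> {}"
        then obtain z where "z \<in> e" "z \<in> ?C" by blast
        then have "e \<subseteq> ?C" using closedD[OF L0[OF psubset.prems(2)] e(1)] by blast
        with e show False by blast
      qed
      ultimately show "e \<subseteq> ?W" by blast
    qed
    have d: "3 dvd card ?W" using psubset.IH[OF sub cl psubset.prems(2)] psubset.prems(3) by blast
    have fC: "finite ?C" using CW psubset.hyps by (rule finite_subset)
    have e: "card ?W = card W - 3" using card_Diff_subset[OF fC CW] c3 by simp
    have g: "card W \<ge> 3" using card_mono[OF psubset.hyps CW] c3 by simp
    have "3 dvd (card W - 3) + 3" using d e by (metis dvd_add dvd_refl)
    then show ?thesis using g by (metis le_add_diff_inverse2)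
  qed
qed



locale S =
  fixes VA VB :: "'a set" and EA EB :: "'a set set" and a1 a2 b1 b2 x :: 'a and F :: "'a set set"
  assumes gA: "graph VA EA" and gB: "graph VB EB" and disj: "VA \<inter> VB = {}"
    and mA: "card VA mod 6 = 0"
    and aE: "{a1, a2} \<in> EA" and xB: "x \<in> VB" and bE: "{b1, b2} \<in> EB"
    and bx: "x \<noteq> b1" "x \<noteq> b2"
    and LF: "lambda_factor (VA \<union> VB - {x}) (del_vert_E (join_E EA a1 a2 EB b1 b2) x) F"
begin

abbreviation "V \<equiv> VA \<union> VB - {x}"

lemma fA: "finite VA" using gA graph_def by blast
lemma fB: "finite VB" using gB graph_def by blast
lemma fV: "finite V" using fA fB by blast

lemma eA: "e \<in> EA \<Longrightarrow> \<exists>p q. e = {p, q} \<and> p \<noteq> q \<and> p \<in> VA \<and> q \<in> VA"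
  using gA graph_def by blast
lemma eB: "e \<in> EB \<Longrightarrow> \<exists>p q. e = {p, q} \<and> p \<noteq> q \<and> p \<in> VB \<and> q \<in> VB"
  using gB graph_def by blast
lemma eAsub: "e \<in> EA \<Longrightarrow> e \<subseteq> VA" using eA by blast
lemma eBsub: "e \<in> EB \<Longrightarrow> e \<subseteq> VB" using eB by blast

lemma a12: "a1 \<in> VA" "a2 \<in> VA" "a1 \<noteq> a2"
proof -
  obtain p q where "{a1, a2} = {p, q}" "p \<noteq> q" "p \<in> VA" "q \<in> VA" using eA[OF aE] by blast
  then show "a1 \<in> VA" "a2 \<in> VA" "a1 \<noteq> a2" by (auto simp: doubleton_eq_iff)
qed

lemma b12: "b1 \<in> VB" "b2 \<in> VB" "b1 \<noteq> b2"
proof -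
  obtain p q where "{b1, b2} = {p, q}" "p \<noteq> q" "p \<in> VB" "q \<in> VB" using eB[OF bE] by blast
  then show "b1 \<in> VB" "b2 \<in> VB" "b1 \<noteq> b2" by (auto simp: doubleton_eq_iff)
qed

lemma dist: "a1 \<noteq> b1" "a1 \<noteq> b2" "a2 \<noteq> b1" "a2 \<noteq> b2" "a1 \<noteq> x" "a2 \<noteq> x"
  using a12 b12 disj xB by blast+

lemma FE: "F \<subseteq> del_vert_E (join_E EA a1 a2 EB b1 b2) x"
  using LF unfolding lambda_factor_def by blast

lemma Fcases: "e \<in> F \<Longrightarrow> x \<notin> e \<and> ((e \<in> EA \<and> e \<noteq> {a1, a2}) \<or> (e \<in> EB \<and> e \<noteq> {b1, b2}) \<or> e = {a1, b1} \<or> e = {a2, b2})"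
proof -
  assume "e \<in> F"
  then have "e \<in> del_vert_E (join_E EA a1 a2 EB b1 b2) x" using FE by (rule subsetD[rotated])
  then show ?thesis unfolding del_vert_E_def join_E_def by (simp; iprover)
qed

lemma Fform: "e \<in> F \<Longrightarrow> \<exists>p q. e = {p, q} \<and> p \<noteq> q \<and> p \<in> V \<and> q \<in> V"
proof -
  assume e: "e \<in> F"
  note c = Fcases[OF e]
  show ?thesis
  proof (cases "e \<in> EA \<and> e \<noteq> {a1, a2}")
    case True
    then show ?thesis using eA[of e] c by blast
  next
    case f1: False
    show ?thesis
    proof (cases "e \<in> EB \<and> e \<noteq> {b1, b2}")
      case True
      then show ?thesis using eB[of e] c by blast
    next
      case False
      then have "e = {a1, b1} \<or> e = {a2, b2}" using c f1 by blast
      then show ?thesis using a12 b12 dist bx c by blast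
    qed
  qed
qed

lemma eformF: "eform F" unfolding eform_def using Fform by blast
lemma FV: "e \<in> F \<Longrightarrow> e \<subseteq> V" using Fform by blast
lemma Fcard2: "e \<in> F \<Longrightarrow> y \<in> e \<Longrightarrow> \<exists>z. z \<noteq> y \<and> z \<in> e"
proof -
  assume "e \<in> F" "y \<in> e"
  then obtain p q where "e = {p, q}" "p \<noteq> q" using Fform by blast
  then show ?thesis by (cases "y = p") auto
qed

lemma closedV: "closedS F V" by (rule closedI) (rule FV)

lemma c3: "v \<in> V \<Longrightarrow> card (comp F v) = 3" using LF unfolding lambda_factor_def by blast
lemma ed2: "v \<in> V \<Longrightarrow> card {e \<in> F. e \<subseteq> comp F v} = 2" using LF unfolding lambda_factor_def by blast
lemma compV: "v \<in> V \<Longrightarrow> comp F v \<subseteq> V" by (rule L1[OF _ closedV])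
lemma fcomp: "v \<in> V \<Longrightarrow> finite (comp F v)" using c3[of v] by (metis card.infinite zero_neq_numeral)

lemma K1: "e \<in> F \<Longrightarrow> e \<noteq> {a1, b1} \<Longrightarrow> e \<noteq> {a2, b2} \<Longrightarrow> y \<in> e \<Longrightarrow> y \<in> VA \<Longrightarrow> e \<subseteq> VA"
proof -
  assume h: "e \<in> F" "e \<noteq> {a1, b1}" "e \<noteq> {a2, b2}" "y \<in> e" "y \<in> VA"
  then have "e \<in> EA \<or> e \<in> EB" using Fcases[OF h(1)] by blast
  then show ?thesis
  proof
    assume "e \<in> EA" then show ?thesis by (rule eAsub)
  next
    assume "e \<in> EB" then have "y \<in> VB" using eBsub h(4) by blast
    with h(5) disj show ?thesis by blast
  qed
qed

lemma K2: "e \<in> F \<Longrightarrow> e \<noteq> {a1, b1} \<Longrightarrow> e \<noteq> {a2, b2} \<Longrightarrow> y \<in> e \<Longrightarrow> y \<in> VB \<Longrightarrow> e \<subseteq> VB - {x}"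
proof -
  assume h: "e \<in> F" "e \<noteq> {a1, b1}" "e \<noteq> {a2, b2}" "y \<in> e" "y \<in> VB"
  have xe: "x \<notin> e" using Fcases[OF h(1)] by blast
  have "e \<in> EA \<or> e \<in> EB" using Fcases[OF h(1)] h(2,3) by blast
  then have "e \<subseteq> VB"
  proof
    assume "e \<in> EA" then have "y \<in> VA" using eAsub h(4) by blast
    with h(5) disj show ?thesis by blast
  next
    assume "e \<in> EB" then show ?thesis by (rule eBsub)
  qed
  with xe show ?thesis by blast
qed

lemma aV: "a1 \<in> V" "a2 \<in> V" "b1 \<in> V" "b2 \<in> V" using a12 b12 bx dist by auto

end


context S begin

lemma VAV: "VA \<subseteq> V" using disj xB by blast

lemma cardrange: assumes "a \<in> VA" "b \<in> comp F a" "b \<notin> VA"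
  shows "card (comp F a - VA) \<ge> 1 \<and> card (comp F a - VA) \<le> 2"
proof -
  have aV: "a \<in> V" using assms(1) VAV by blast
  have f: "finite (comp F a)" by (rule fcomp[OF aV])
  have "b \<in> comp F a - VA" using assms by blast
  then have g1: "card (comp F a - VA) \<ge> 1" using f
    by (metis One_nat_def Suc_leI card_gt_0_iff empty_iff finite_Diff)
  have "comp F a - VA \<subseteq> comp F a - {a}" using assms(1) by blast
  then have "card (comp F a - VA) \<le> card (comp F a - {a})" using f by (simp add: card_mono)
  also have "card (comp F a - {a}) = 2" using c3[OF aV] comp_self[of a F] f by simp
  finally show ?thesis using g1 by simp
qed

lemma case0: assumes n1: "{a1, b1} \<notin> F" and n2: "{a2, b2} \<notin> F"
  shows "\<exists>F'. lambda_factor (VB - {x}) (del_vert_E EB x) F' \<and> {b1, b2} \<notin> F'"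
proof -
  let ?SB = "VB - {x}"
  define FB where "FB = {e \<in> F. e \<subseteq> ?SB}"
  have neA: "e \<in> F \<Longrightarrow> e \<noteq> {a1, b1} \<and> e \<noteq> {a2, b2}" for e using n1 n2 by blast
  have clF: "closedS F ?SB"
  proof (rule closedI)
    fix e y assume h: "e \<in> F" "y \<in> e" "y \<in> ?SB"
    then show "e \<subseteq> ?SB" using K2[OF h(1) _ _ h(2)] neA[OF h(1)] by blast
  qed
  have clFB: "closedS FB ?SB" by (rule closedI) (simp add: FB_def)
  have eq: "{e\<in>F. e \<subseteq> ?SB} = {e\<in>FB. e \<subseteq> ?SB}" by (auto simp: FB_def)
  have FBsub: "FB \<subseteq> del_vert_E EB x"
  proof
    fix e assume e: "e \<in> FB"
    then have eF: "e \<in> F" and eS: "e \<subseteq> ?SB" by (auto simp: FB_def)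
    obtain p q where pq: "e = {p, q}" using Fform[OF eF] by blast
    have "e \<notin> EA"
    proof
      assume "e \<in> EA" then have "p \<in> VA" using eAsub pq by blast
      moreover have "p \<in> VB" using eS pq by blast
      ultimately show False using disj by blast
    qed
    note nA = this
    have "x \<notin> e" using Fcases[OF eF] by blast
    moreover have "e \<in> EB" using Fcases[OF eF] neA[OF eF] nA by blast
    ultimately show "e \<in> del_vert_E EB x" by (simp add: del_vert_E_def)
  qed
  have notb: "{b1, b2} \<notin> FB"
  proof
    assume h: "{b1, b2} \<in> FB"
    then have hF: "{b1, b2} \<in> F" by (simp add: FB_def)
    have "{b1, b2} \<notin> EA" using eAsub b12 disj by blast
    moreover have "{b1, b2} \<noteq> {a1, b1}" "{b1, b2} \<noteq> {a2, b2}" using dist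
      by (auto simp: doubleton_eq_iff)
    ultimately show False using Fcases[OF hF] by blast
  qed
  have "lambda_factor ?SB (del_vert_E EB x) FB"
    unfolding lambda_factor_def
  proof (rule conjI[OF FBsub], rule ballI)
    fix v assume v: "v \<in> ?SB"
    have vV: "v \<in> V" using v by blast
    have ceq: "comp F v = comp FB v" by (rule L2[OF v clF clFB eq])
    have cS: "comp F v \<subseteq> ?SB" by (rule L1[OF v clF])
    have "{e \<in> FB. e \<subseteq> comp FB v} = {e \<in> F. e \<subseteq> comp F v}"
      using cS ceq by (auto simp: FB_def)
    then show "card (comp FB v) = 3 \<and> card {e \<in> FB. e \<subseteq> comp FB v} = 2"
      using c3[OF vV] ed2[OF vV] ceq by simp
  qed
  then show ?thesis using notb by blast
qed

lemma case1: assumes y1: "{a1, b1} \<in> F" and n2: "{a2, b2} \<notin> F" shows False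
proof -
  let ?C = "comp F a1"
  have b1C: "b1 \<in> ?C" using comp_step[OF comp_self y1] .
  let ?W = "VA \<union> ?C"
  have cl: "closedS F ?W"
  proof (rule closedI)
    fix e y assume h: "e \<in> F" "y \<in> e" "y \<in> ?W"
    show "e \<subseteq> ?W"
    proof (cases "y \<in> ?C")
      case True
      then show ?thesis using closedD[OF L0[OF eformF] h(1,2)] by blast
    next
      case False
      then have yA: "y \<in> VA" using h by blast
      show ?thesis
      proof (cases "e = {a1, b1}")
        case True then show ?thesis using b1C a12 by blast
      next
        case False
        have "e \<noteq> {a2, b2}" using n2 h(1) by blast
        then show ?thesis using K1[OF h(1) False _ h(2) yA] by blast
      qed
    qed
  qed
  have a1V: "a1 \<in> V" by (rule aV)
  have WV: "?W \<subseteq> V" using VAV compV[OF a1V] by blast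
  have fW: "finite ?W" using finite_subset[OF WV fV] .
  have "3 dvd card ?W"
    by (rule L4[OF fW cl eformF]) (use WV c3 in blast)
  moreover have "card ?W = card VA + card (?C - VA)"
  proof -
    have e: "?W = VA \<union> (?C - VA)" by blast
    have "finite (?C - VA)" using fcomp[OF a1V] by simp
    then have h: "card (VA \<union> (?C - VA)) = card VA + card (?C - VA)"
      using fA by (intro card_Un_disjoint) auto
    show ?thesis by (subst e, rule h)
  qed
  moreover have "3 dvd card VA" using mA by presburger
  ultimately have "3 dvd card (?C - VA)" by (simp add: dvd_add_right_iff)
  moreover have "card (?C - VA) \<ge> 1 \<and> card (?C - VA) \<le> 2"
    using cardrange[OF a12(1) b1C] b12 disj by blast
  ultimately show False by presburger
qed

end


context S begin

lemma C12: assumes y1: "{a1, b1} \<in> F" and y2: "{a2, b2} \<in> F"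
  shows "b1 \<in> comp F a1" "b2 \<in> comp F a2" "comp F a1 \<inter> comp F a2 = {}"
proof -
  show b1C: "b1 \<in> comp F a1" using comp_step[OF comp_self y1] .
  show b2C: "b2 \<in> comp F a2" using comp_step[OF comp_self y2] .
  have "a2 \<notin> comp F a1"
  proof
    assume "a2 \<in> comp F a1"
    then have "comp F a2 = comp F a1" by (rule L3)
    then have "{a1, a2, b1, b2} \<subseteq> comp F a1" using b1C b2C comp_self[of a1 F] comp_self[of a2 F] by blast
    then have "card {a1, a2, b1, b2} \<le> card (comp F a1)" using fcomp[OF aV(1)] by (rule card_mono[rotated])
    moreover have "card {a1, a2, b1, b2} = 4" using dist a12(3) b12(3) by simp
    ultimately show False using c3[OF aV(1)] by simp
  qed
  then show "comp F a1 \<inter> comp F a2 = {}" using comp_disj by (metis inf_commute)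
qed

lemma count2: assumes y1: "{a1, b1} \<in> F" and y2: "{a2, b2} \<in> F"
  shows "3 dvd card (comp F a1 - VA) + card (comp F a2 - VA)"
proof -
  let ?C1 = "comp F a1" and ?C2 = "comp F a2"
  note c = C12[OF y1 y2]
  let ?W = "VA \<union> ?C1 \<union> ?C2"
  have cl: "closedS F ?W"
  proof (rule closedI)
    fix e y assume h: "e \<in> F" "y \<in> e" "y \<in> ?W"
    show "e \<subseteq> ?W"
    proof (cases "y \<in> ?C1 \<or> y \<in> ?C2")
      case True
      then show ?thesis using closedD[OF L0[OF eformF] h(1,2)] by blast
    next
      case False
      then have yA: "y \<in> VA" using h by blast
      show ?thesis
      proof (cases "e = {a1, b1} \<or> e = {a2, b2}")
        case True then show ?thesis using c a12 by blast
      next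
        case False
        then show ?thesis using K1[OF h(1) _ _ h(2) yA] by blast
      qed
    qed
  qed
  have WV: "?W \<subseteq> V" using VAV compV[OF aV(1)] compV[OF aV(2)] by blast
  have fW: "finite ?W" using finite_subset[OF WV fV] .
  have "3 dvd card ?W"
    by (rule L4[OF fW cl eformF]) (use WV c3 in blast)
  moreover have "card ?W = card VA + (card (?C1 - VA) + card (?C2 - VA))"
  proof -
    have e: "?W = VA \<union> ((?C1 - VA) \<union> (?C2 - VA))" by blast
    have f1: "finite (?C1 - VA)" using fcomp[OF aV(1)] by simp
    have f2: "finite (?C2 - VA)" using fcomp[OF aV(2)] by simp
    have h1: "card ((?C1 - VA) \<union> (?C2 - VA)) = card (?C1 - VA) + card (?C2 - VA)"
      using f1 f2 c(3) by (intro card_Un_disjoint) auto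
    have "card (VA \<union> ((?C1 - VA) \<union> (?C2 - VA))) = card VA + card ((?C1 - VA) \<union> (?C2 - VA))"
      using fA f1 f2 by (intro card_Un_disjoint) auto
    then show ?thesis unfolding h1 by (subst e)
  qed
  moreover have "3 dvd card VA" using mA by presburger
  ultimately show ?thesis by (simp add: dvd_add_right_iff)
qed

end


context S begin

lemma case2: assumes y1: "{a1, b1} \<in> F" and y2: "{a2, b2} \<in> F"
  and k1: "card (comp F a1 - VA) = 2" and k2: "card (comp F a2 - VA) = 1"
  shows "\<exists>F'. lambda_factor VA EA F' \<and> {a1, a2} \<in> F'"
proof -
  let ?C1 = "comp F a1" and ?C2 = "comp F a2"
  note c = C12[OF y1 y2]
  have f1: "finite ?C1" by (rule fcomp[OF aV(1)])
  have f2: "finite ?C2" by (rule fcomp[OF aV(2)])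
  have split: "card C = card (C \<inter> VA) + card (C - VA)" if "finite C" for C
  proof -
    have "card ((C \<inter> VA) \<union> (C - VA)) = card (C \<inter> VA) + card (C - VA)"
      using that by (intro card_Un_disjoint) auto
    moreover have "(C \<inter> VA) \<union> (C - VA) = C" by blast
    ultimately show ?thesis by simp
  qed
  have "card (?C1 \<inter> VA) = 1" using split[OF f1] k1 c3[OF aV(1)] by simp
  then obtain z where "?C1 \<inter> VA = {z}" by (rule card_1_singletonE)
  moreover have "a1 \<in> ?C1 \<inter> VA" using comp_self[of a1 F] a12 by blast
  ultimately have C1A: "?C1 \<inter> VA = {a1}" by (metis singletonD)
  have "card (?C2 \<inter> VA) = 2" using split[OF f2] k2 c3[OF aV(2)] by simp
  then obtain p q where pq: "?C2 \<inter> VA = {p, q}" "p \<noteq> q" by (meson card_2_iff)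
  have a2in: "a2 \<in> ?C2 \<inter> VA" using comp_self[of a2 F] a12 by blast
  obtain u where C2A: "?C2 \<inter> VA = {a2, u}" and ua2: "u \<noteq> a2"
  proof (cases "a2 = p")
    case True then show ?thesis using that pq by blast
  next
    case False then have "a2 = q" using a2in pq by blast
    then show ?thesis using that pq by (metis insert_commute)
  qed
  have uA: "u \<in> VA" "u \<in> ?C2" using C2A by blast+
  have ua1: "u \<noteq> a1" using uA(2) c(3) comp_self[of a1 F] by blast
  have "card (?C2 - VA) = 1" by (rule k2)
  then obtain z2 where "?C2 - VA = {z2}" by (rule card_1_singletonE)
  moreover have "b2 \<in> ?C2 - VA" using c(2) b12 disj by blast
  ultimately have C2B: "?C2 - VA = {b2}" by (metis singletonD)
  have C2eq: "?C2 = {a2, u, b2}" using C2A C2B by blast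
  have cd2: "card {e \<in> F. e \<subseteq> ?C2} = 2" by (rule ed2[OF aV(2)])
  have "\<not> {e \<in> F. e \<subseteq> ?C2} \<subseteq> {{a2, b2}}"
  proof
    assume "{e \<in> F. e \<subseteq> ?C2} \<subseteq> {{a2, b2}}"
    then have "card {e \<in> F. e \<subseteq> ?C2} \<le> card {{a2, b2}}" by (rule card_mono[rotated]) simp
    then show False using cd2 by simp
  qed
  then obtain e0 where e0: "e0 \<in> F" "e0 \<subseteq> ?C2" "e0 \<noteq> {a2, b2}" by blast
  obtain p0 q0 where e0pq: "e0 = {p0, q0}" "p0 \<noteq> q0" using Fform[OF e0(1)] by blast
  have ub2: "{u, b2} \<notin> F"
  proof
    assume h: "{u, b2} \<in> F"
    have "{u, b2} \<notin> EA" using eAsub b12 disj by blast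
    moreover have "{u, b2} \<notin> EB" using eBsub uA disj by blast
    moreover have "{u, b2} \<noteq> {a1, b1}" using b12(3) dist by (auto simp: doubleton_eq_iff)
    moreover have "{u, b2} \<noteq> {a2, b2}" using ua2 dist by (auto simp: doubleton_eq_iff)
    ultimately show False using Fcases[OF h] by blast
  qed
  have eau: "{a2, u} \<in> F"
  proof -
    have "p0 \<in> {a2, u, b2}" "q0 \<in> {a2, u, b2}" using e0(2) e0pq C2eq by blast+
    then have "e0 = {a2, u} \<or> e0 = {a2, b2} \<or> e0 = {u, b2}" using e0pq
      by (auto simp: insert_commute)
    then show ?thesis using e0 ub2 by blast
  qed
  define FA where "FA = {e \<in> F. e \<subseteq> VA} \<union> {{a1, a2}}"
  let ?T = "{a1, a2, u}"
  let ?S0 = "VA - ?C1 - ?C2"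
  have FAsub: "FA \<subseteq> EA"
  proof
    fix e assume "e \<in> FA"
    then consider "e = {a1, a2}" | "e \<in> F" "e \<subseteq> VA" unfolding FA_def by blast
    then show "e \<in> EA"
    proof cases
      case 1 then show ?thesis using aE by simp
    next
      case 2
      obtain p' q' where pq': "e = {p', q'}" using Fform[OF 2(1)] by blast
      have "e \<notin> EB" using eBsub 2(2) disj pq' by blast
      moreover have "e \<noteq> {a1, b1}" "e \<noteq> {a2, b2}" using 2(2) b12 disj by blast+
      ultimately show ?thesis using Fcases[OF 2(1)] by blast
    qed
  qed
  have aFA: "{a1, a2} \<in> FA" unfolding FA_def by blast
  have eauA: "{a2, u} \<in> FA" unfolding FA_def using eau a12 uA by blast
  have noa1: "e \<in> F \<Longrightarrow> e \<subseteq> VA \<Longrightarrow> a1 \<notin> e" for e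
  proof
    assume h: "e \<in> F" "e \<subseteq> VA" "a1 \<in> e"
    have "e \<subseteq> ?C1" using closedD[OF L0[OF eformF] h(1) h(3) comp_self] .
    then have "e \<subseteq> {a1}" using h(2) C1A by blast
    moreover obtain z where "z \<noteq> a1" "z \<in> e" using Fcard2[OF h(1) h(3)] by blast
    ultimately show False by blast
  qed
  have clT: "closedS FA ?T"
  proof (rule closedI)
    fix e y assume h: "e \<in> FA" "y \<in> e" "y \<in> ?T"
    show "e \<subseteq> ?T"
    proof (cases "e = {a1, a2}")
      case True then show ?thesis by blast
    next
      case False
      then have eF: "e \<in> F" "e \<subseteq> VA" using h(1) unfolding FA_def by blast+
      then have ya1: "y \<noteq> a1" using noa1 h(2) by blast
      then have "y \<in> ?C2" using h(3) uA comp_self[of a2 F] by blast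
      then have "e \<subseteq> ?C2" using closedD[OF L0[OF eformF] eF(1) h(2)] by blast
      then show ?thesis using eF(2) C2A by blast
    qed
  qed
  have compT: "comp FA a2 = ?T"
  proof
    show "comp FA a2 \<subseteq> ?T" by (rule L1[OF _ clT]) simp
  next
    have "a1 \<in> comp FA a2" using comp_step[OF comp_self, of a2 a1 FA] aFA by (simp add: insert_commute)
    moreover have "u \<in> comp FA a2" using comp_step[OF comp_self eauA] .
    ultimately show "?T \<subseteq> comp FA a2" using comp_self[of a2 FA] by blast
  qed
  have edT: "{e \<in> FA. e \<subseteq> ?T} = {{a1, a2}, {a2, u}}"
  proof
    show "{{a1, a2}, {a2, u}} \<subseteq> {e \<in> FA. e \<subseteq> ?T}" using aFA eauA by blast
  next
    show "{e \<in> FA. e \<subseteq> ?T} \<subseteq> {{a1, a2}, {a2, u}}"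
    proof
      fix e assume h: "e \<in> {e \<in> FA. e \<subseteq> ?T}"
      show "e \<in> {{a1, a2}, {a2, u}}"
      proof (cases "e = {a1, a2}")
        case True then show ?thesis by blast
      next
        case False
        then have eF: "e \<in> F" "e \<subseteq> VA" using h unfolding FA_def by blast+
        then have "a1 \<notin> e" using noa1 by blast
        then have "e \<subseteq> {a2, u}" using h by blast
        moreover obtain p' q' where "e = {p', q'}" "p' \<noteq> q'" using Fform[OF eF(1)] by blast
        ultimately have "e = {a2, u}" by auto
        then show ?thesis by blast
      qed
    qed
  qed
  have cardT: "card ?T = 3" using a12(3) ua1 ua2 by simp
  have cardEd: "card {{a1, a2}, {a2, u}} = 2"
  proof -
    have "{a1, a2} \<noteq> {a2, u}" using ua1 a12(3) by (auto simp: doubleton_eq_iff)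
    then show ?thesis by simp
  qed
  have a1C: "a1 \<in> ?C1" by (rule comp_self)
  have a2C: "a2 \<in> ?C2" by (rule comp_self)
  have clS0F: "closedS F ?S0"
  proof (rule closedI)
    fix e y assume h: "e \<in> F" "y \<in> e" "y \<in> ?S0"
    have ne1: "e \<noteq> {a1, b1}" using h(2,3) a1C b12 disj by blast
    have ne2: "e \<noteq> {a2, b2}" using h(2,3) a2C b12 disj by blast
    have eA: "e \<subseteq> VA" using K1[OF h(1) ne1 ne2 h(2)] h(3) by blast
    have n1: "e \<inter> ?C1 = {}"
    proof (rule ccontr)
      assume "e \<inter> ?C1 \<noteq> {}"
      then obtain z where "z \<in> e" "z \<in> ?C1" by blast
      then have "e \<subseteq> ?C1" using closedD[OF L0[OF eformF] h(1)] by blast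
      then show False using h(2,3) by blast
    qed
    have n2: "e \<inter> ?C2 = {}"
    proof (rule ccontr)
      assume "e \<inter> ?C2 \<noteq> {}"
      then obtain z where "z \<in> e" "z \<in> ?C2" by blast
      then have "e \<subseteq> ?C2" using closedD[OF L0[OF eformF] h(1)] by blast
      then show False using h(2,3) by blast
    qed
    show "e \<subseteq> ?S0" using eA n1 n2 by blast
  qed
  have clS0FA: "closedS FA ?S0"
  proof (rule closedI)
    fix e y assume h: "e \<in> FA" "y \<in> e" "y \<in> ?S0"
    have "e \<noteq> {a1, a2}" using h(2,3) a1C a2C by blast
    then have "e \<in> F" using h(1) unfolding FA_def by blast
    then show "e \<subseteq> ?S0" using closedD[OF clS0F _ h(2,3)] by blast
  qed
  have eqS0: "{e \<in> F. e \<subseteq> ?S0} = {e \<in> FA. e \<subseteq> ?S0}"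
  proof
    show "{e \<in> F. e \<subseteq> ?S0} \<subseteq> {e \<in> FA. e \<subseteq> ?S0}" unfolding FA_def by blast
  next
    show "{e \<in> FA. e \<subseteq> ?S0} \<subseteq> {e \<in> F. e \<subseteq> ?S0}" unfolding FA_def using a1C by blast
  qed
  have "lambda_factor VA EA FA"
    unfolding lambda_factor_def
  proof (rule conjI[OF FAsub], rule ballI)
    fix v assume v: "v \<in> VA"
    show "card (comp FA v) = 3 \<and> card {e \<in> FA. e \<subseteq> comp FA v} = 2"
    proof (cases "v \<in> ?T")
      case True
      then have "v \<in> comp FA a2" using compT by simp
      then have "comp FA v = ?T" using L3 compT by metis
      then show ?thesis using cardT edT cardEd by simp
    next
      case False
      then have vS: "v \<in> ?S0" using v C1A C2A by blast
      have vV: "v \<in> V" using v VAV by blast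
      have ceq: "comp F v = comp FA v" by (rule L2[OF vS clS0F clS0FA eqS0])
      have cS: "comp F v \<subseteq> ?S0" by (rule L1[OF vS clS0F])
      have K: "a1 \<notin> comp F v" using cS a1C by blast
      have KA: "comp F v \<subseteq> VA" using cS by blast
      have "{e \<in> FA. e \<subseteq> comp F v} = {e \<in> F. e \<subseteq> comp F v}"
      proof (rule set_eqI, rule iffI)
        fix e assume h: "e \<in> {e \<in> FA. e \<subseteq> comp F v}"
        then have "e \<noteq> {a1, a2}" using K by blast
        then show "e \<in> {e \<in> F. e \<subseteq> comp F v}" using h unfolding FA_def by blast
      next
        fix e assume h: "e \<in> {e \<in> F. e \<subseteq> comp F v}"
        then show "e \<in> {e \<in> FA. e \<subseteq> comp F v}" using KA unfolding FA_def by blast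
      qed
      then have "{e \<in> FA. e \<subseteq> comp FA v} = {e \<in> F. e \<subseteq> comp F v}" using ceq by simp
      then show ?thesis using c3[OF vV] ed2[OF vV] ceq by simp
    qed
  qed
  then show ?thesis using aFA by blast
qed

end


theorem mainTheorem11:
  fixes VA VB :: "'a set" and EA EB :: "'a set set" and a1 a2 b1 b2 x :: 'a
  assumes "cubic VA EA" and "cubic VB EB" and "VA \<inter> VB = {}"
    and "card VA mod 6 = 0" and "card VB mod 6 = 4"
    and "{a1, a2} \<in> EA" and "x \<in> VB" and "{b1, b2} \<in> EB"
    and "\<not> (\<exists>F. lambda_factor VA EA F \<and> {a1, a2} \<in> F)"
    and "{b1, b2} \<in> del_vert_E EB x"
    and "\<not> (\<exists>F. lambda_factor (del_vert_V VB x) (del_vert_E EB x) F \<and> {b1, b2} \<notin> F)"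
  shows "card (join_V VA VB) mod 6 = 4 \<and>
         \<not> (\<exists>F. lambda_factor (del_vert_V (join_V VA VB) x)
                  (del_vert_E (join_E EA a1 a2 EB b1 b2) x) F)"
proof
  have gA: "graph VA EA" and gB: "graph VB EB" using assms(1,2) unfolding cubic_def by blast+
  have fA: "finite VA" and fB: "finite VB" using gA gB unfolding graph_def by blast+
  have "card (join_V VA VB) = card VA + card VB"
    unfolding join_V_def using fA fB assms(3) by (rule card_Un_disjoint)
  then show "card (join_V VA VB) mod 6 = 4" using assms(4,5) by presburger
next
  have gA: "graph VA EA" and gB: "graph VB EB" using assms(1,2) unfolding cubic_def by blast+
  have bx: "x \<noteq> b1" "x \<noteq> b2" using assms(10) unfolding del_vert_E_def by auto
  show "\<not> (\<exists>F. lambda_factor (del_vert_V (join_V VA VB) x)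
                  (del_vert_E (join_E EA a1 a2 EB b1 b2) x) F)"
  proof
    assume "\<exists>F. lambda_factor (del_vert_V (join_V VA VB) x)
                  (del_vert_E (join_E EA a1 a2 EB b1 b2) x) F"
    then obtain F where LF0: "lambda_factor (del_vert_V (join_V VA VB) x)
                  (del_vert_E (join_E EA a1 a2 EB b1 b2) x) F" by blast
    have LF: "lambda_factor (VA \<union> VB - {x}) (del_vert_E (join_E EA a1 a2 EB b1 b2) x) F"
      using LF0 unfolding del_vert_V_def join_V_def .
    have jeq: "join_E EA a2 a1 EB b2 b1 = join_E EA a1 a2 EB b1 b2"
      unfolding join_E_def by (simp add: insert_commute Un_commute)
    have s1: "S VA VB EA EB a1 a2 b1 b2 x F"
      unfolding S_def using gA gB assms(3,4,6,7,8) bx LF by blast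
    have s2: "S VA VB EA EB a2 a1 b2 b1 x F"
      unfolding S_def using gA gB assms(3,4,6,7,8) bx LF jeq by (simp add: insert_commute)
    have nB: "\<not> (\<exists>F. lambda_factor (VB - {x}) (del_vert_E EB x) F \<and> {b1, b2} \<notin> F)"
      using assms(11) unfolding del_vert_V_def .
    have nA': "\<not> (\<exists>F. lambda_factor VA EA F \<and> {a2, a1} \<in> F)"
      using assms(9) by (simp add: insert_commute)
    show False
    proof (cases "{a1, b1} \<in> F")
      case y1: True
      show ?thesis
      proof (cases "{a2, b2} \<in> F")
        case y2: True
        have d: "3 dvd card (comp F a1 - VA) + card (comp F a2 - VA)"
          by (rule S.count2[OF s1 y1 y2])
        have r1: "card (comp F a1 - VA) \<ge> 1 \<and> card (comp F a1 - VA) \<le> 2"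
          using S.cardrange[OF s1 S.a12(1)[OF s1] S.C12(1)[OF s1 y1 y2]] S.b12[OF s1] assms(3) by blast
        have r2: "card (comp F a2 - VA) \<ge> 1 \<and> card (comp F a2 - VA) \<le> 2"
          using S.cardrange[OF s1 S.a12(2)[OF s1] S.C12(2)[OF s1 y1 y2]] S.b12[OF s1] assms(3) by blast
        have "(card (comp F a1 - VA) = 2 \<and> card (comp F a2 - VA) = 1) \<or>
              (card (comp F a1 - VA) = 1 \<and> card (comp F a2 - VA) = 2)"
          using d r1 r2 by presburger
        then show False
        proof
          assume k: "card (comp F a1 - VA) = 2 \<and> card (comp F a2 - VA) = 1"
          show False using S.case2[OF s1 y1 y2] k assms(9) by blast
        next
          assume k: "card (comp F a1 - VA) = 1 \<and> card (comp F a2 - VA) = 2"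
          show False using S.case2[OF s2 y2 y1] k nA' by blast
        qed
      next
        case n2: False
        show False by (rule S.case1[OF s1 y1 n2])
      qed
    next
      case n1: False
      show ?thesis
      proof (cases "{a2, b2} \<in> F")
        case y2: True
        show False by (rule S.case1[OF s2 y2 n1])
      next
        case n2: False
        show False using S.case0[OF s1 n1 n2] nB by blast
      qed
    qed
  qed
qed

end
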